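(* Let $(u_n)_{n<\omega}$ be an $\omega$-sequence of words such that the product $u_0u_1\cdots u_n$ is prime for each $n<\omega$. Then the $\omega$-product $u_0u_1u_2\cdots$ is prime.
   Context: $A$ is a finite alphabet with a linear order $<_A$. Words are sequences of letters indexed by countable ordinals; $x^\alpha$ is the concatenation of $\alpha$ copies of $x$. A suffix of $x$ is $x[\gamma,|x|)$, proper if $0<\gamma<|x|$. Write $x<_{str}x'$ if there are letters $a<_Ab$ and words $y,z,z'$ with $x=yaz$, $x'=ybz'$; $x\le_{lex}x'$ iff $x$ is a prefix of $x'$ or $x<_{str}x'$. A word $x$ is primitive if $x=y^\alpha$ implies $\alpha=1$ and $y=x$. A word $w$ is prime if it is primitive and every proper suffix $z$ of $w$ satisfies $w\le_{lex}z$. *)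

theory Defs
  imports Main "HOL-Library.Nat_Bijection"
begin

text \<open>A transfinite word over alphabet 'a: a well-order on a set of naturals
(its positions; hence its length is a countable ordinal) together with a labelling
of positions by letters. Words are considered up to label-preserving order isomorphism.\<close>

type_synonym 'a word = "nat rel \<times> (nat \<Rightarrow> 'a)"

definition wf_word :: "'a word \<Rightarrow> bool" where
  "wf_word x \<longleftrightarrow> Well_order (fst x)"

definition word_iso :: "'a word \<Rightarrow> 'a word \<Rightarrow> bool" where
  "word_iso x y \<longleftrightarrow> (\<exists>h. bij_betw h (Field (fst x)) (Field (fst y)) \<and>
     (\<forall>p\<in>Field (fst x). \<forall>q\<in>Field (fst x). (p,q) \<in> fst x \<longleftrightarrow> (h p, h q) \<in> fst y) \<and>
     (\<forall>p\<in>Field (fst x). snd y (h p) = snd x p))"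

definition restr :: "'a word \<Rightarrow> nat set \<Rightarrow> 'a word" where
  "restr x S = (fst x \<inter> (S \<times> S), snd x)"

definition init_seg :: "nat rel \<Rightarrow> nat set \<Rightarrow> bool" where
  "init_seg r S \<longleftrightarrow> S \<subseteq> Field r \<and> (\<forall>p q. (p,q) \<in> r \<and> q \<in> S \<longrightarrow> p \<in> S)"

definition is_prefix :: "'a word \<Rightarrow> 'a word \<Rightarrow> bool" where
  "is_prefix x x' \<longleftrightarrow> (\<exists>S. init_seg (fst x') S \<and> word_iso x (restr x' S))"

definition below :: "nat rel \<Rightarrow> nat \<Rightarrow> nat set" where
  "below r p = {q. (q,p) \<in> r \<and> q \<noteq> p}"

definition str_less :: "('a::linorder) word \<Rightarrow> 'a word \<Rightarrow> bool" where
  "str_less x x' \<longleftrightarrow> (\<exists>p\<in>Field (fst x). \<exists>p'\<in>Field (fst x').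
     word_iso (restr x (below (fst x) p)) (restr x' (below (fst x') p')) \<and> snd x p < snd x' p')"

definition lex_le :: "('a::linorder) word \<Rightarrow> 'a word \<Rightarrow> bool" where
  "lex_le x x' \<longleftrightarrow> is_prefix x x' \<or> str_less x x'"

definition proper_suffix :: "'a word \<Rightarrow> 'a word \<Rightarrow> bool" where
  "proper_suffix x z \<longleftrightarrow> (\<exists>p\<in>Field (fst x). (\<exists>q\<in>Field (fst x). q \<noteq> p \<and> (q,p) \<in> fst x) \<and>
     z = restr x {q. (p,q) \<in> fst x})"

definition is_power :: "'a word \<Rightarrow> 'a word \<Rightarrow> nat rel \<Rightarrow> bool" where
  "is_power x y \<alpha> \<longleftrightarrow> (\<exists>h. bij_betw h (Field (fst x)) (Field \<alpha> \<times> Field (fst y)) \<and>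
     (\<forall>p\<in>Field (fst x). \<forall>q\<in>Field (fst x). (p,q) \<in> fst x \<longleftrightarrow>
        ((fst (h p) \<noteq> fst (h q) \<and> (fst (h p), fst (h q)) \<in> \<alpha>) \<or>
         (fst (h p) = fst (h q) \<and> (snd (h p), snd (h q)) \<in> fst y))) \<and>
     (\<forall>p\<in>Field (fst x). snd x p = snd y (snd (h p))))"

definition primitive :: "'a word \<Rightarrow> bool" where
  "primitive x \<longleftrightarrow> (\<forall>y \<alpha>. wf_word y \<and> Well_order \<alpha> \<and> is_power x y \<alpha> \<longrightarrow>
      card (Field \<alpha>) = 1 \<and> word_iso y x)"

definition prime_word :: "('a::linorder) word \<Rightarrow> bool" where
  "prime_word w \<longleftrightarrow> primitive w \<and> (\<forall>z. proper_suffix w z \<longrightarrow> lex_le w z)"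

definition block_prod :: "nat set \<Rightarrow> (nat \<Rightarrow> 'a word) \<Rightarrow> 'a word" where
  "block_prod I u =
    ({(prod_encode (i,p), prod_encode (j,q)) | i p j q. i \<in> I \<and> j \<in> I \<and>
        p \<in> Field (fst (u i)) \<and> q \<in> Field (fst (u j)) \<and> (i < j \<or> (i = j \<and> (p,q) \<in> fst (u i)))},
     \<lambda>k. snd (u (fst (prod_decode k))) (snd (prod_decode k)))"

end

theory Submission
  imports Defs
begin



lemma wo_refl: "Well_order r \<Longrightarrow> x \<in> Field r \<Longrightarrow> (x,x) \<in> r"
  by (auto simp: well_order_on_def linear_order_on_def partial_order_on_def preorder_on_def refl_on_def)
lemma wo_trans: "Well_order r \<Longrightarrow> (x,y) \<in> r \<Longrightarrow> (y,z) \<in> r \<Longrightarrow> (x,z) \<in> r"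
  using wo_rel.TRANS[of r] unfolding wo_rel_def trans_def by blast
lemma wo_antisym: "Well_order r \<Longrightarrow> (x,y) \<in> r \<Longrightarrow> (y,x) \<in> r \<Longrightarrow> x = y"
  using wo_rel.ANTISYM[of r] unfolding wo_rel_def antisym_def by blast
lemma wo_total: "Well_order r \<Longrightarrow> x \<in> Field r \<Longrightarrow> y \<in> Field r \<Longrightarrow> (x,y) \<in> r \<or> (y,x) \<in> r"
  using wo_rel.TOTALS[of r] unfolding wo_rel_def by blast
lemma wo_wf: "Well_order r \<Longrightarrow> wf (r - Id)"
  by (simp add: well_order_on_def)
lemma wo_Field_Restr: assumes "Well_order r" "A \<subseteq> Field r" shows "Field (Restr r A) = A"
proof
  show "Field (Restr r A) \<subseteq> A" by (rule Field_Restr_subset)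
  show "A \<subseteq> Field (Restr r A)"
  proof
    fix x assume "x \<in> A"
    then have "(x,x) \<in> Restr r A" using wo_refl[OF assms(1)] assms(2) by blast
    then show "x \<in> Field (Restr r A)" by (auto simp: Field_def)
  qed
qed

lemma wo_min:
  assumes "Well_order r" "a \<in> A" "A \<subseteq> Field r"
  obtains m where "m \<in> A" "\<forall>b\<in>A. (m,b) \<in> r"
proof -
  have "\<exists>z\<in>A. \<forall>y. (y,z) \<in> r - Id \<longrightarrow> y \<notin> A"
    using wo_wf[OF assms(1)] assms(2) unfolding wf_eq_minimal by blast
  then obtain m where m: "m \<in> A" "\<And>b. (b,m) \<in> r - Id \<Longrightarrow> b \<notin> A" by blast
  have "\<forall>b\<in>A. (m,b) \<in> r"
  proof
    fix b assume b: "b \<in> A"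
    show "(m,b) \<in> r"
    proof (cases "b = m")
      case True then show ?thesis using wo_refl[OF assms(1)] m assms(3) by auto
    next
      case False
      then show ?thesis using wo_total[OF assms(1), of m b] m b assms(3) by auto
    qed
  qed
  then show ?thesis using m that by blast
qed

definition iemb :: "nat rel \<Rightarrow> nat rel \<Rightarrow> nat set \<Rightarrow> (nat \<Rightarrow> nat) \<Rightarrow> bool" where
  "iemb r1 r2 D f \<longleftrightarrow> f ` D \<subseteq> Field r2 \<and> (\<forall>a\<in>D. \<forall>b\<in>D. (a,b) \<in> r1 \<longleftrightarrow> (f a, f b) \<in> r2) \<and>
     (\<forall>x y. (y,x) \<in> r2 \<and> x \<in> f ` D \<longrightarrow> y \<in> f ` D)"

lemma iemb_inj:
  assumes "Well_order r1" "Well_order r2" "iemb r1 r2 D f" "a \<in> D" "b \<in> D" "f a = f b"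
  shows "a = b"
proof -
  have "(f a, f b) \<in> r2" using assms wo_refl[OF assms(2)] unfolding iemb_def by auto
  then have "(a,b) \<in> r1" "(b,a) \<in> r1" using assms unfolding iemb_def by auto
  then show ?thesis using wo_antisym[OF assms(1)] by auto
qed

lemma iemb_inj_on:
  assumes "Well_order r1" "Well_order r2" "iemb r1 r2 D f"
  shows "inj_on f D"
  using iemb_inj[OF assms] by (auto simp: inj_on_def)

lemma iemb_unique_aux:
  assumes "Well_order r1" "Well_order r2" "iemb r1 r2 D f" "iemb r1 r2 D g"
    and "a \<in> D" "\<forall>b. (b,a) \<in> r1 - Id \<longrightarrow> b \<in> D \<longrightarrow> f b = g b"
    and "(f a, g a) \<in> r2"
  shows "f a = g a"
proof (rule ccontr)
  assume ne: "f a \<noteq> g a"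
  have "f a \<in> g ` D" using assms(4,5,7) unfolding iemb_def by blast
  then obtain b where b: "b \<in> D" "f a = g b" by auto
  have "(b,a) \<in> r1" using assms(4,5,7) b unfolding iemb_def by auto
  moreover have "b \<noteq> a" using b ne by auto
  ultimately have "f b = g b" using assms(6) b by auto
  then have "f b = f a" using b by auto
  then have "b = a" using iemb_inj[OF assms(1,2,3)] b assms(5) by auto
  then show False using \<open>b \<noteq> a\<close> by auto
qed

lemma iemb_unique:
  assumes "Well_order r1" "Well_order r2" "iemb r1 r2 D f" "iemb r1 r2 D g" "x \<in> D"
  shows "f x = g x"
proof (rule ccontr)
  assume "f x \<noteq> g x"
  define M where "M = {a\<in>D. f a \<noteq> g a}"
  have xM: "x \<in> M" unfolding M_def using \<open>f x \<noteq> g x\<close> assms(5) by blast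
  have "\<exists>z\<in>M. \<forall>y. (y,z) \<in> r1 - Id \<longrightarrow> y \<notin> M"
    using wo_wf[OF assms(1)] xM unfolding wf_eq_minimal by blast
  then obtain a where a0: "a \<in> M" "\<forall>b. (b,a) \<in> r1 - Id \<longrightarrow> b \<notin> M" by blast
  have a: "a \<in> D" "f a \<noteq> g a" using a0(1) unfolding M_def by auto
  have h: "\<forall>b. (b,a) \<in> r1 - Id \<longrightarrow> b \<in> D \<longrightarrow> f b = g b" using a0(2) unfolding M_def by blast
  have fa: "f a \<in> Field r2" "g a \<in> Field r2" using a assms(3,4) unfolding iemb_def by auto
  show False
  proof (cases "(f a, g a) \<in> r2")
    case True
    have "f a = g a" by (rule iemb_unique_aux[OF assms(1,2,3,4) a(1) h True])
    then show False using a by simp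
  next
    case False
    then have "(g a, f a) \<in> r2" using wo_total[OF assms(2) fa] by auto
    moreover have h2: "\<forall>b. (b,a) \<in> r1 - Id \<longrightarrow> b \<in> D \<longrightarrow> g b = f b" using h by auto
    ultimately have "g a = f a" using iemb_unique_aux[OF assms(1,2,4,3) a(1) h2] by blast
    then show False using a by auto
  qed
qed

lemma iemb_mono:
  assumes "iemb r1 r2 D f" "D' \<subseteq> D" "\<forall>a c. (c,a) \<in> r1 \<and> a \<in> D' \<and> c \<in> D \<longrightarrow> c \<in> D'"
  shows "iemb r1 r2 D' f"
  unfolding iemb_def
proof (intro conjI allI impI)
  show "f ` D' \<subseteq> Field r2" using assms unfolding iemb_def by blast
  show "\<forall>a\<in>D'. \<forall>b\<in>D'. ((a, b) \<in> r1) = ((f a, f b) \<in> r2)" using assms unfolding iemb_def by blast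
  fix x y assume xy: "(y, x) \<in> r2 \<and> x \<in> f ` D'"
  then obtain a where a: "a \<in> D'" "x = f a" by auto
  have "y \<in> f ` D" using xy assms(1,2) unfolding iemb_def by blast
  then obtain c where c: "c \<in> D" "y = f c" by auto
  have "(c,a) \<in> r1" using assms(1,2) a c xy unfolding iemb_def by blast
  then have "c \<in> D'" using assms(3) a c by blast
  then show "y \<in> f ` D'" using c by auto
qed

lemma iemb_comp:
  assumes "iemb r1 r2 D f" "iemb r2 r3 D2 g" "f ` D \<subseteq> D2"
  shows "iemb r1 r3 D (g \<circ> f)"
  unfolding iemb_def
proof (intro conjI allI impI)
  show "(g \<circ> f) ` D \<subseteq> Field r3" using assms unfolding iemb_def by auto
  show "\<forall>a\<in>D. \<forall>b\<in>D. ((a, b) \<in> r1) = (((g \<circ> f) a, (g \<circ> f) b) \<in> r3)"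
  proof (intro ballI)
    fix a b assume "a \<in> D" "b \<in> D"
    then show "((a, b) \<in> r1) = (((g \<circ> f) a, (g \<circ> f) b) \<in> r3)"
      using assms unfolding iemb_def by (simp add: image_subset_iff)
  qed
  fix x y assume xy: "(y, x) \<in> r3 \<and> x \<in> (g \<circ> f) ` D"
  then obtain a where a: "a \<in> D" "x = g (f a)" by auto
  have "y \<in> g ` D2" using xy a assms(2,3) unfolding iemb_def by blast
  then obtain e where e: "e \<in> D2" "y = g e" by auto
  have "f a \<in> D2" using a assms(3) by auto
  then have "(e, f a) \<in> r2" using assms(2) e a xy unfolding iemb_def by auto
  then have "e \<in> f ` D" using assms(1) a unfolding iemb_def by blast
  then show "y \<in> (g \<circ> f) ` D" using e by auto
qed

lemma iemb_id:
  assumes "D \<subseteq> Field r" "\<forall>a c. (c,a) \<in> r \<and> a \<in> D \<longrightarrow> c \<in> D"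
  shows "iemb r r D id"
  using assms unfolding iemb_def by auto




lemma restr_pair: "restr (r, L) S = (Restr r S, L)"
  by (simp add: restr_def)

lemma Restr_Restr: "Restr (Restr r X) Y = Restr r (X \<inter> Y)"
  by auto

lemma below_Restr: "a \<in> X \<Longrightarrow> below (Restr r X) a = below r a \<inter> X"
  by (auto simp: below_def)

locale setting =
  fixes W :: "nat rel" and L :: "nat \<Rightarrow> 'a::linorder" and B :: "nat \<Rightarrow> nat set"
  assumes WO: "Well_order W"
    and HB1: "\<And>n. B n \<subseteq> Field W"
    and HB2: "\<And>n m. n \<le> m \<Longrightarrow> B n \<subseteq> B m"
    and HB3: "\<And>x. x \<in> Field W \<Longrightarrow> \<exists>n. x \<in> B n"
    and HB4: "\<And>n x y. (y,x) \<in> W \<Longrightarrow> x \<in> B n \<Longrightarrow> y \<in> B n"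
    and HP: "\<And>n. prime_word (Restr W (B n), L)"
begin

lemma FB: "Field (Restr W (B n)) = B n"
  using wo_Field_Restr[OF WO HB1] .

lemma big: "x \<in> Field W \<Longrightarrow> \<exists>n\<ge>k. x \<in> B n"
proof -
  assume "x \<in> Field W"
  then obtain n where "x \<in> B n" using HB3 by blast
  then have "x \<in> B (max n k)" using HB2[of n "max n k"] by auto
  then show ?thesis by (intro exI[of _ "max n k"]) auto
qed

lemma big2: "x \<in> Field W \<Longrightarrow> y \<in> Field W \<Longrightarrow> \<exists>n\<ge>k. x \<in> B n \<and> y \<in> B n"
proof -
  assume "x \<in> Field W" "y \<in> Field W"
  then obtain n1 n2 where "n1 \<ge> k" "x \<in> B n1" "n2 \<ge> k" "y \<in> B n2" using big by blast
  then have "x \<in> B (max n1 n2)" "y \<in> B (max n1 n2)" using HB2[of n1 "max n1 n2"] HB2[of n2 "max n1 n2"] by auto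
  then show ?thesis using \<open>n1 \<ge> k\<close> by (intro exI[of _ "max n1 n2"]) auto
qed

lemma below_sub: "a \<in> B n \<Longrightarrow> below W a \<subseteq> B n"
  using HB4 by (auto simp: below_def)

lemma suffix_part:
  assumes "proper_suffix (W, L) z"
  shows "lex_le (W, L) z"
proof -
  obtain p q where pq: "p \<in> Field W" "q \<noteq> p" "(q,p) \<in> W" and zdef: "z = restr (W,L) {r. (p,r) \<in> W}"
    using assms unfolding proper_suffix_def by auto
  define P where "P = {r. (p,r) \<in> W}"
  have PF: "P \<subseteq> Field W" unfolding P_def by (auto intro: FieldI2)
  have z: "z = (Restr W P, L)" using zdef P_def by (simp add: restr_pair)
  have FP: "Field (Restr W P) = P" using wo_Field_Restr[OF WO PF] .
  obtain k where k: "p \<in> B k" using HB3 pq(1) by blast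
  have pn: "p \<in> B n" if "k \<le> n" for n using HB2[OF that] k by auto
  have qn: "q \<in> B n" if "k \<le> n" for n using HB4[OF pq(3) pn[OF that]] .
  have LEX: "lex_le (Restr W (B n), L) (Restr W (P \<inter> B n), L)" if "k \<le> n" for n
  proof -
    have "{r. (p,r) \<in> Restr W (B n)} = P \<inter> B n" using pn[OF that] unfolding P_def by auto
    then have e: "restr (Restr W (B n), L) {r. (p,r) \<in> Restr W (B n)} = (Restr W (P \<inter> B n), L)"
      by (auto simp: restr_def)
    have "proper_suffix (Restr W (B n), L) (Restr W (P \<inter> B n), L)"
      unfolding proper_suffix_def fst_conv FB
      apply (rule bexI[of _ p])
      using pn[OF that] qn[OF that] pq e by auto
    then show ?thesis using HP[of n] unfolding prime_word_def by blast
  qed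
  show ?thesis
  proof (cases "\<exists>n\<ge>k. str_less (Restr W (B n), L) (Restr W (P \<inter> B n), L)")
    case True
    then obtain n where n: "k \<le> n" "str_less (Restr W (B n), L) (Restr W (P \<inter> B n), L)" by blast
    have PBF: "P \<inter> B n \<subseteq> Field W" using PF by auto
    obtain a b where ab: "a \<in> B n" "b \<in> P \<inter> B n"
      "word_iso (restr (Restr W (B n), L) (below (Restr W (B n)) a))
                (restr (Restr W (P \<inter> B n), L) (below (Restr W (P \<inter> B n)) b))" "L a < L b"
      using n(2) unfolding str_less_def fst_conv snd_conv FB wo_Field_Restr[OF WO PBF] by blast
    have e1: "restr (Restr W (B n), L) (below (Restr W (B n)) a) = restr (W, L) (below W a)"
      using below_sub[OF ab(1)] ab(1) by (auto simp: restr_def below_Restr)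
    have e2: "restr (Restr W (P \<inter> B n), L) (below (Restr W (P \<inter> B n)) b) = restr (Restr W P, L) (below (Restr W P) b)"
      using below_sub[of b n] ab(2) by (auto simp: restr_def below_Restr)
    have "str_less (W, L) (Restr W P, L)"
      unfolding str_less_def fst_conv snd_conv FP
      apply (rule bexI[of _ a])
       apply (rule bexI[of _ b])
      using ab e1 e2 HB1 by auto
    then show ?thesis using z unfolding lex_le_def by simp
  next
    case False
    then have PRE: "is_prefix (Restr W (B n), L) (Restr W (P \<inter> B n), L)" if "k \<le> n" for n
      using LEX[OF that] that unfolding lex_le_def by blast
    define Q where "Q n S h \<longleftrightarrow> init_seg (Restr W (P \<inter> B n)) S \<and> bij_betw h (B n) S \<and>
        (\<forall>a\<in>B n. \<forall>b\<in>B n. (a,b) \<in> W \<longleftrightarrow> (h a, h b) \<in> W) \<and> (\<forall>a\<in>B n. L (h a) = L a)" for n S h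
    have ex: "\<exists>S h. Q n S h" if kn: "k \<le> n" for n
    proof -
      obtain S where S: "init_seg (Restr W (P \<inter> B n)) S" "word_iso (Restr W (B n), L) (restr (Restr W (P \<inter> B n), L) S)"
        using PRE[OF kn] unfolding is_prefix_def fst_conv by blast
      have PBF: "P \<inter> B n \<subseteq> Field W" using PF by auto
      have SP: "S \<subseteq> P \<inter> B n" using S(1) unfolding init_seg_def wo_Field_Restr[OF WO PBF] by blast
      have SF: "S \<subseteq> Field W" using SP PF by auto
      have r: "restr (Restr W (P \<inter> B n), L) S = (Restr W S, L)" using SP by (auto simp: restr_def)
      obtain h where h: "bij_betw h (B n) S"
        "\<forall>a\<in>B n. \<forall>b\<in>B n. (a,b) \<in> Restr W (B n) \<longleftrightarrow> (h a, h b) \<in> Restr W S"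
        "\<forall>a\<in>B n. L (h a) = L a"
        using S(2) unfolding r word_iso_def fst_conv snd_conv FB wo_Field_Restr[OF WO SF] by blast
      have "\<forall>a\<in>B n. \<forall>b\<in>B n. (a,b) \<in> W \<longleftrightarrow> (h a, h b) \<in> W"
      proof (intro ballI)
        fix a b assume "a \<in> B n" "b \<in> B n"
        moreover then have "h a \<in> S" "h b \<in> S" using h(1) by (auto simp: bij_betw_def)
        ultimately show "(a,b) \<in> W \<longleftrightarrow> (h a, h b) \<in> W" using h(2) by auto
      qed
      then show ?thesis using S(1) h unfolding Q_def by blast
    qed
    define h where "h n = (SOME h. \<exists>S. Q n S h)" for n
    define S where "S n = (SOME S. Q n S (h n))" for n
    have QQ: "Q n (S n) (h n)" if kn: "k \<le> n" for n
    proof -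
      obtain S0 h0 where "Q n S0 h0" using ex[OF kn] by blast
      then have e: "\<exists>h S. Q n S h" by blast
      have "\<exists>S. Q n S (h n)" unfolding h_def by (rule someI_ex[OF e])
      then show "Q n (S n) (h n)" unfolding S_def by (rule someI_ex)
    qed
    have WP: "Well_order (Restr W P)" using Well_order_Restr[OF WO] .
    have emb: "iemb W (Restr W P) (B n) (h n)" if "k \<le> n" for n
    proof -
      have q: "Q n (S n) (h n)" using QQ[OF that] .
      have PBF: "P \<inter> B n \<subseteq> Field W" using PF by auto
      have SP: "S n \<subseteq> P \<inter> B n" using q unfolding Q_def init_seg_def wo_Field_Restr[OF WO PBF] by blast
      have im: "h n ` B n = S n" using q unfolding Q_def bij_betw_def by blast
      show ?thesis unfolding iemb_def FP
      proof (intro conjI allI impI ballI)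
        show "h n ` B n \<subseteq> P" using im SP by auto
        fix a b assume ab: "a \<in> B n" "b \<in> B n"
        then have "h n a \<in> P" "h n b \<in> P" using im SP by auto
        then show "(a,b) \<in> W \<longleftrightarrow> (h n a, h n b) \<in> Restr W P" using q ab unfolding Q_def by auto
      next
        fix x y assume xy: "(y, x) \<in> Restr W P \<and> x \<in> h n ` B n"
        then have "x \<in> S n" using im by auto
        then have "x \<in> B n" using SP by auto
        then have "y \<in> B n" using xy HB4 by auto
        then have "(y,x) \<in> Restr W (P \<inter> B n)" using xy \<open>x \<in> S n\<close> SP by auto
        then have "y \<in> S n" using q \<open>x \<in> S n\<close> unfolding Q_def init_seg_def by blast
        then show "y \<in> h n ` B n" using im by auto
      qed
    qed
    have cons0: "h n x = h m x" if "k \<le> n" "n \<le> m" "x \<in> B n" for n m x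
    proof -
      have "iemb W (Restr W P) (B n) (h m)"
        using iemb_mono[OF emb[of m] HB2[OF that(2)]] that HB4 by auto
      then show ?thesis using iemb_unique[OF WO WP emb[OF that(1)] _ that(3)] HB1 by auto
    qed
    have cons: "h n x = h m x" if "k \<le> n" "k \<le> m" "x \<in> B n" "x \<in> B m" for n m x
    proof (cases "n \<le> m")
      case True then show ?thesis using cons0[of n m x] that by blast
    next
      case False then have "m \<le> n" by simp
      then show ?thesis using cons0[of m n x] that by simp
    qed
    define N where "N x = (SOME n. k \<le> n \<and> x \<in> B n)" for x
    define g where "g x = h (N x) x" for x
    have gh: "g x = h n x" if "k \<le> n" "x \<in> B n" for x n
    proof -
      have c: "k \<le> n \<and> x \<in> B n" using that by simp
      have "k \<le> N x \<and> x \<in> B (N x)" unfolding N_def by (rule someI[of "\<lambda>n. k \<le> n \<and> x \<in> B n" n, OF c])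
      then have "h (N x) x = h n x" using cons[of "N x" n x] that by blast
      then show ?thesis unfolding g_def .
    qed
    define S' where "S' = g ` Field W"
    have S'P: "S' \<subseteq> P"
    proof
      fix y assume "y \<in> S'"
      then obtain x where x: "x \<in> Field W" "y = g x" unfolding S'_def by auto
      obtain n where n: "n \<ge> k" "x \<in> B n" using big[OF x(1)] by blast
      have "y = h n x" using gh[OF n(1,2)] x by simp
      then show "y \<in> P" using emb[OF n(1)] n(2) unfolding iemb_def FP by auto
    qed
    have S'F: "S' \<subseteq> Field W" using S'P PF by auto
    have init: "init_seg (Restr W P) S'"
      unfolding init_seg_def FP
    proof (intro conjI allI impI)
      show "S' \<subseteq> P" by (rule S'P)
      fix y x assume yx: "(y, x) \<in> Restr W P \<and> x \<in> S'"
      then obtain a where a: "a \<in> Field W" "x = g a" unfolding S'_def by auto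
      obtain n where n: "n \<ge> k" "a \<in> B n" using big[OF a(1)] by blast
      have "x \<in> h n ` B n" using gh[OF n(1,2)] n(2) a by simp
      then have "y \<in> h n ` B n" using emb[OF n(1)] yx unfolding iemb_def by blast
      then obtain c where c: "c \<in> B n" "y = h n c" by auto
      have "c \<in> Field W" using c HB1 by auto
      then have "y = g c" using gh[OF n(1) c(1)] c by simp
      then show "y \<in> S'" using \<open>c \<in> Field W\<close> unfolding S'_def by blast
    qed
    have r: "restr (Restr W P, L) S' = (Restr W S', L)" using S'P by (auto simp: restr_def)
    have iso: "word_iso (W, L) (restr (Restr W P, L) S')"
      unfolding r word_iso_def fst_conv snd_conv wo_Field_Restr[OF WO S'F]
    proof (intro exI[of _ g] conjI ballI)
      show "bij_betw g (Field W) S'"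
        unfolding bij_betw_def S'_def
      proof
        show "inj_on g (Field W)"
        proof (rule inj_onI)
          fix x y assume xy: "x \<in> Field W" "y \<in> Field W" "g x = g y"
          obtain n where n: "n \<ge> k" "x \<in> B n" "y \<in> B n" using big2[OF xy(1,2)] by blast
          have "h n x = h n y" using gh[OF n(1,2)] gh[OF n(1,3)] xy by simp
          then show "x = y" using QQ[OF n(1)] n unfolding Q_def bij_betw_def inj_on_def by blast
        qed
      qed simp
    next
      fix a b assume ab: "a \<in> Field W" "b \<in> Field W"
      obtain n where n: "n \<ge> k" "a \<in> B n" "b \<in> B n" using big2[OF ab] by blast
      have "g a \<in> S'" "g b \<in> S'" using ab unfolding S'_def by auto
      moreover have "(a,b) \<in> W \<longleftrightarrow> (h n a, h n b) \<in> W" using QQ[OF n(1)] n unfolding Q_def by blast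
      ultimately show "(a,b) \<in> W \<longleftrightarrow> (g a, g b) \<in> Restr W S'" using gh[OF n(1,2)] gh[OF n(1,3)] by simp
    next
      fix a assume a: "a \<in> Field W"
      obtain n where n: "n \<ge> k" "a \<in> B n" using big[OF a] by blast
      show "L (g a) = L a" using QQ[OF n(1)] n(2) gh[OF n(1,2)] unfolding Q_def by simp
    qed
    have "is_prefix (W, L) z" unfolding is_prefix_def z fst_conv using init iso by blast
    then show ?thesis unfolding lex_le_def by simp
  qed
qed

end



lemma prim_nonempty:
  assumes "primitive (r, L)"
  shows "Field r \<noteq> {}"
proof
  assume e: "Field r = {}"
  have wo: "Well_order ({}::nat rel)" by (simp add: well_order_on_def linear_order_on_def partial_order_on_def preorder_on_def refl_on_def trans_def antisym_def total_on_def)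
  have "wf_word ({}::nat rel, L)" unfolding wf_word_def using wo by simp
  moreover have "is_power (r, L) ({}, L) {}" unfolding is_power_def using e
    by (intro exI[of _ "\<lambda>p::nat. (0::nat, 0::nat)"]) (simp add: bij_betw_def)
  ultimately have "card (Field ({}::nat rel)) = 1" using assms wo unfolding primitive_def by blast
  then show False by simp
qed

context setting
begin

lemma nonempty: "Field W \<noteq> {}"
proof -
  have "Field (Restr W (B 0)) \<noteq> {}" using prim_nonempty HP[of 0] unfolding prime_word_def by blast
  then show ?thesis using FB HB1 by auto
qed

lemma primitive_part: "primitive (W, L)"
  unfolding primitive_def
proof (intro allI impI)
  fix y :: "'a word" and \<alpha> :: "nat rel"
  assume A: "wf_word y \<and> Well_order \<alpha> \<and> is_power (W, L) y \<alpha>"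
  define Y where "Y = fst y"
  define M where "M = snd y"
  have WY: "Well_order Y" using A unfolding wf_word_def Y_def by simp
  have WA: "Well_order \<alpha>" using A by simp
  obtain h where hb: "bij_betw h (Field W) (Field \<alpha> \<times> Field Y)"
    and ord: "\<forall>p\<in>Field W. \<forall>q\<in>Field W. (p,q) \<in> W \<longleftrightarrow>
        ((fst (h p) \<noteq> fst (h q) \<and> (fst (h p), fst (h q)) \<in> \<alpha>) \<or>
         (fst (h p) = fst (h q) \<and> (snd (h p), snd (h q)) \<in> Y))"
    and lab: "\<forall>p\<in>Field W. L p = M (snd (h p))"
    using A unfolding is_power_def Y_def M_def fst_conv snd_conv by blast
  define idx where "idx p = fst (h p)" for p
  define ps where "ps p = snd (h p)" for p
  define hi where "hi = inv_into (Field W) h"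
  have hiF: "hi (a,t) \<in> Field W" if "a \<in> Field \<alpha>" "t \<in> Field Y" for a t
    using bij_betw_inv_into[OF hb] that unfolding hi_def bij_betw_def by auto
  have hhi: "h (hi (a,t)) = (a,t)" if "a \<in> Field \<alpha>" "t \<in> Field Y" for a t
    using bij_betw_inv_into_right[OF hb] that unfolding hi_def by auto
  have idxhi: "idx (hi (a,t)) = a" "ps (hi (a,t)) = t" if "a \<in> Field \<alpha>" "t \<in> Field Y" for a t
    using hhi[OF that] unfolding idx_def ps_def by auto
  have hih: "hi (h p) = p" if "p \<in> Field W" for p
    using bij_betw_inv_into_left[OF hb that] unfolding hi_def .
  have hF0: "h p \<in> Field \<alpha> \<times> Field Y" if "p \<in> Field W" for p
    using hb that unfolding bij_betw_def by blast
  have hF: "idx p \<in> Field \<alpha>" "ps p \<in> Field Y" if "p \<in> Field W" for p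
    using hF0[OF that] unfolding idx_def ps_def by (auto simp: mem_Times_iff)
  have hi_eq: "hi (idx p, ps p) = p" if "p \<in> Field W" for p
    using hih[OF that] unfolding idx_def ps_def by simp
  have ord': "(p,q) \<in> W \<longleftrightarrow> ((idx p \<noteq> idx q \<and> (idx p, idx q) \<in> \<alpha>) \<or> (idx p = idx q \<and> (ps p, ps q) \<in> Y))"
    if "p \<in> Field W" "q \<in> Field W" for p q
    using ord that unfolding idx_def ps_def by blast
  have lab': "L p = M (ps p)" if "p \<in> Field W" for p using lab that unfolding ps_def by blast
  obtain x0 where x0: "x0 \<in> Field W" using nonempty by blast
  obtain a0 where a0: "a0 \<in> Field \<alpha>" "\<forall>b\<in>Field \<alpha>. (a0,b) \<in> \<alpha>"
    using wo_min[OF WA hF(1)[OF x0]] by blast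
  obtain y0 where y0: "y0 \<in> Field Y" "\<forall>b\<in>Field Y. (y0,b) \<in> Y"
    using wo_min[OF WY hF(2)[OF x0]] by blast
  show "card (Field \<alpha>) = 1 \<and> word_iso y (W, L)"
  proof (cases "\<forall>a\<in>Field \<alpha>. a = a0")
    case True
    have Fa: "Field \<alpha> = {a0}" using True a0(1) by blast
    define g where "g t = hi (a0, t)" for t
    have "word_iso y (W, L)"
      unfolding word_iso_def fst_conv snd_conv Y_def[symmetric] M_def[symmetric]
    proof (intro exI[of _ g] conjI ballI)
      show "bij_betw g (Field Y) (Field W)"
        unfolding bij_betw_def
      proof
        show "inj_on g (Field Y)"
        proof (rule inj_onI)
          fix s t assume st: "s \<in> Field Y" "t \<in> Field Y" "g s = g t"
          have e1: "ps (g s) = s" using idxhi(2)[OF a0(1) st(1)] unfolding g_def .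
          have e2: "ps (g t) = t" using idxhi(2)[OF a0(1) st(2)] unfolding g_def .
          have "s = ps (g s)" using e1 by simp
          also have "\<dots> = ps (g t)" using st(3) by simp
          also have "\<dots> = t" using e2 .
          finally show "s = t" .
        qed
        show "g ` Field Y = Field W"
        proof
          show "g ` Field Y \<subseteq> Field W" using hiF a0 unfolding g_def by auto
          show "Field W \<subseteq> g ` Field Y"
          proof
            fix p assume p: "p \<in> Field W"
            have "idx p = a0" using True hF(1)[OF p] by blast
            then have "p = g (ps p)" using hi_eq[OF p] unfolding g_def by simp
            then show "p \<in> g ` Field Y" using hF(2)[OF p] by blast
          qed
        qed
      qed
    next
      fix s t assume st: "s \<in> Field Y" "t \<in> Field Y"
      have "g s \<in> Field W" "g t \<in> Field W" using hiF a0 st unfolding g_def by auto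
      then show "(s,t) \<in> Y \<longleftrightarrow> (g s, g t) \<in> W"
        using ord'[of "g s" "g t"] idxhi[OF a0(1) st(1)] idxhi[OF a0(1) st(2)] unfolding g_def by simp
    next
      fix s assume s: "s \<in> Field Y"
      have "g s \<in> Field W" using hiF a0 s unfolding g_def by auto
      then show "L (g s) = M s" using lab' idxhi[OF a0(1) s] unfolding g_def by simp
    qed
    then show ?thesis using Fa by simp
  next
    case False
    then obtain a1 where a1: "a1 \<in> Field \<alpha>" "a1 \<noteq> a0" by blast
    define x1 where "x1 = hi (a1, y0)"
    have x1F: "x1 \<in> Field W" using hiF a1 y0 unfolding x1_def by auto
    obtain m where m: "x1 \<in> B m" using HB3[OF x1F] by blast
    define X where "X = B m"
    have XF: "X \<subseteq> Field W" using HB1 unfolding X_def by auto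
    have C: "hi (a0, t) \<in> X" if t: "t \<in> Field Y" for t
    proof -
      have "hi (a0,t) \<in> Field W" using hiF a0 t by auto
      moreover have "idx (hi (a0,t)) = a0" using idxhi a0 t by auto
      moreover have "idx x1 = a1" using idxhi a1 y0 unfolding x1_def by auto
      ultimately have "(hi (a0,t), x1) \<in> W" using ord' x1F a1 a0 by auto
      then show ?thesis using HB4 m unfolding X_def by blast
    qed
    show ?thesis
    proof (cases "\<forall>p\<in>X. \<forall>t\<in>Field Y. hi (idx p, t) \<in> X")
      case True
      define I where "I = idx ` X"
      have IF: "I \<subseteq> Field \<alpha>" using hF XF unfolding I_def by auto
      have FI: "Field (Restr \<alpha> I) = I" using wo_Field_Restr[OF WA IF] .
      have WI: "Well_order (Restr \<alpha> I)" using Well_order_Restr[OF WA] .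
      have FX: "Field (Restr W X) = X" using wo_Field_Restr[OF WO XF] .
      have P1: "is_power (Restr W X, L) y (Restr \<alpha> I)"
        unfolding is_power_def fst_conv snd_conv Y_def[symmetric] M_def[symmetric] FI FX
      proof (intro exI[of _ h] conjI ballI)
        show "bij_betw h X (I \<times> Field Y)"
          unfolding bij_betw_def
        proof
          show "inj_on h X" using hb XF unfolding bij_betw_def by (auto intro: inj_on_subset)
          show "h ` X = I \<times> Field Y"
          proof
            show "h ` X \<subseteq> I \<times> Field Y"
            proof
              fix z assume "z \<in> h ` X"
              then obtain p where p: "p \<in> X" "z = h p" by auto
              then have "z = (idx p, ps p)" unfolding idx_def ps_def by simp
              then show "z \<in> I \<times> Field Y" using p hF XF unfolding I_def by auto
            qed
            show "I \<times> Field Y \<subseteq> h ` X"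
            proof
              fix z assume "z \<in> I \<times> Field Y"
              then obtain p t where pt: "p \<in> X" "t \<in> Field Y" "z = (idx p, t)" unfolding I_def by auto
              have "hi (idx p, t) \<in> X" using True pt by blast
              moreover have "h (hi (idx p, t)) = z" using hhi[of "idx p" t] hF XF pt by auto
              ultimately show "z \<in> h ` X" by force
            qed
          qed
        qed
      next
        fix p q assume pq: "p \<in> X" "q \<in> X"
        have "idx p \<in> I" "idx q \<in> I" using pq unfolding I_def by auto
        then show "(p, q) \<in> Restr W X \<longleftrightarrow>
          (fst (h p) \<noteq> fst (h q) \<and> (fst (h p), fst (h q)) \<in> Restr \<alpha> I \<or>
           fst (h p) = fst (h q) \<and> (snd (h p), snd (h q)) \<in> Y)"
          using ord'[of p q] pq XF unfolding idx_def ps_def by auto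
      next
        fix p assume "p \<in> X"
        then show "L p = M (snd (h p))" using lab' XF unfolding ps_def by auto
      qed
      have "card (Field (Restr \<alpha> I)) = 1" using HP[of m] WI A P1 unfolding prime_word_def primitive_def X_def by blast
      then have "card I = 1" using FI by simp
      moreover have "a0 \<in> I"
      proof -
        have "hi (a0, y0) \<in> X" using C y0 by auto
        then show ?thesis using idxhi a0 y0 unfolding I_def by force
      qed
      moreover have "a1 \<in> I"
      proof -
        have "x1 \<in> X" using m unfolding X_def .
        then show ?thesis using idxhi a1 y0 unfolding I_def x1_def by force
      qed
      ultimately have False using a1(2) by (auto simp: card_1_singleton_iff)
      then show ?thesis by simp
    next
      case False
      then obtain x' t where xt: "x' \<in> X" "t \<in> Field Y" "hi (idx x', t) \<notin> X" by blast
      define a where "a = idx x'"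
      define x'' where "x'' = hi (a, t)"
      have x'F: "x' \<in> Field W" using xt XF by auto
      have aF: "a \<in> Field \<alpha>" using hF x'F unfolding a_def by auto
      have x''X: "x'' \<notin> X" using xt(3) unfolding x''_def a_def .
      have x''F: "x'' \<in> Field W" using hiF aF xt unfolding x''_def by auto
      have aa0: "a \<noteq> a0" using C xt x''X unfolding x''_def by auto
      define s where "s = hi (a, y0)"
      have sF: "s \<in> Field W" using hiF aF y0 unfolding s_def by auto
      have sidx: "idx s = a" "ps s = y0" using idxhi aF y0 unfolding s_def by auto
      have "(s, x') \<in> W" using ord'[OF sF x'F] sidx y0 hF(2)[OF x'F] unfolding a_def by auto
      then have sX: "s \<in> X" using HB4 xt unfolding X_def by blast
      define c0 where "c0 = hi (a0, y0)"
      have c0X: "c0 \<in> X" using C y0 unfolding c0_def by auto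
      have c0F: "c0 \<in> Field W" using c0X XF by auto
      have c0idx: "idx c0 = a0" using idxhi a0 y0 unfolding c0_def by auto
      have c0s: "(c0, s) \<in> W" "c0 \<noteq> s" using ord'[OF c0F sF] c0idx sidx aa0 a0 aF by auto
      define Z where "Z = {r. (s, r) \<in> Restr W X}"
      have Zeq: "Z = {r\<in>X. (s,r) \<in> W}" using sX unfolding Z_def by auto
      have ZX: "Z \<subseteq> X" using Zeq by auto
      have ZF: "Z \<subseteq> Field W" using ZX XF by auto
      define WX where "WX = Restr W X"
      define WZ where "WZ = Restr W Z"
      have FX: "Field WX = X" using wo_Field_Restr[OF WO XF] unfolding WX_def .
      have FZ: "Field WZ = Z" using wo_Field_Restr[OF WO ZF] unfolding WZ_def .
      have WWX: "Well_order WX" using Well_order_Restr[OF WO] unfolding WX_def .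
      have WWZ: "Well_order WZ" using Well_order_Restr[OF WO] unfolding WZ_def .
      have "proper_suffix (WX, L) (WZ, L)"
        unfolding proper_suffix_def fst_conv FX
      proof (rule bexI[of _ s])
        have "restr (WX, L) {r. (s, r) \<in> WX} = (WZ, L)"
          using ZX unfolding WX_def WZ_def Z_def restr_def by auto
        then show "(\<exists>q\<in>X. q \<noteq> s \<and> (q, s) \<in> WX) \<and> (WZ, L) = restr (WX, L) {q. (s, q) \<in> WX}"
          using c0X c0s sX unfolding WX_def by auto
      qed (rule sX)
      then have LEX: "lex_le (WX, L) (WZ, L)" using HP[of m] unfolding prime_word_def WX_def WZ_def X_def by blast
      have Zidx: "idx r = a" if r: "r \<in> Z" for r
      proof (rule ccontr)
        assume ne: "idx r \<noteq> a"
        have rF: "r \<in> Field W" using r ZF by auto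
        have "(s, r) \<in> W" using r Zeq by auto
        then have "(a, idx r) \<in> \<alpha>" using ord'[OF sF rF] sidx ne by auto
        moreover have "idx x'' = a" using idxhi aF xt unfolding x''_def by auto
        ultimately have "(x'', r) \<in> W" using ord'[OF x''F rF] ne by auto
        then have "x'' \<in> X" using HB4 r ZX unfolding X_def by blast
        then show False using x''X by simp
      qed
      define \<phi> where "\<phi> r = hi (a0, ps r)" for r
      have phiX: "\<phi> r \<in> X" if "r \<in> Z" for r using C hF ZF that unfolding \<phi>_def by auto
      have phiF: "\<phi> r \<in> Field W" if "r \<in> Z" for r using phiX XF that by auto
      have phiidx: "idx (\<phi> r) = a0" "ps (\<phi> r) = ps r" if "r \<in> Z" for r
        using idxhi a0 hF ZF that unfolding \<phi>_def by auto
      have phiL: "L (\<phi> r) = L r" if "r \<in> Z" for r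
        using lab' phiF[OF that] ZF that phiidx[OF that] by auto
      have phiemb: "iemb WZ WX Z \<phi>"
        unfolding iemb_def FX
      proof (intro conjI ballI allI impI)
        show "\<phi> ` Z \<subseteq> X" using phiX by auto
      next
        fix r1 r2 assume r: "r1 \<in> Z" "r2 \<in> Z"
        have "(r1,r2) \<in> WZ \<longleftrightarrow> (r1,r2) \<in> W" using r unfolding WZ_def by auto
        also have "\<dots> \<longleftrightarrow> (ps r1, ps r2) \<in> Y"
          using ord'[of r1 r2] r ZF Zidx[OF r(1)] Zidx[OF r(2)] by auto
        also have "\<dots> \<longleftrightarrow> (\<phi> r1, \<phi> r2) \<in> W" using ord'[OF phiF[OF r(1)] phiF[OF r(2)]] phiidx r by auto
        also have "\<dots> \<longleftrightarrow> (\<phi> r1, \<phi> r2) \<in> WX" using phiX r unfolding WX_def by auto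
        finally show "(r1,r2) \<in> WZ \<longleftrightarrow> (\<phi> r1, \<phi> r2) \<in> WX" .
      next
        fix v w assume vw: "(v, w) \<in> WX \<and> w \<in> \<phi> ` Z"
        then obtain r where r: "r \<in> Z" "w = \<phi> r" by auto
        have vX: "v \<in> X" using vw unfolding WX_def by auto
        have vF: "v \<in> Field W" using vX XF by auto
        have vw': "(v, \<phi> r) \<in> W" using vw r unfolding WX_def by auto
        have iv: "idx v = a0"
        proof (rule ccontr)
          assume "idx v \<noteq> a0"
          then have "(idx v, a0) \<in> \<alpha>" using ord'[OF vF phiF[OF r(1)]] vw' phiidx[OF r(1)] by auto
          moreover have "(a0, idx v) \<in> \<alpha>" using a0 hF(1)[OF vF] by auto
          ultimately show False using wo_antisym[OF WA] \<open>idx v \<noteq> a0\<close> by blast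
        qed
        have pv: "(ps v, ps r) \<in> Y" using ord'[OF vF phiF[OF r(1)]] vw' phiidx[OF r(1)] iv by auto
        define r' where "r' = hi (a, ps v)"
        have r'F: "r' \<in> Field W" using hiF aF hF(2)[OF vF] unfolding r'_def by auto
        have r'i: "idx r' = a" "ps r' = ps v" using idxhi aF hF(2)[OF vF] unfolding r'_def by auto
        have rF: "r \<in> Field W" using r ZF by auto
        have "(r', r) \<in> W" using ord'[OF r'F rF] r'i Zidx[OF r(1)] pv by auto
        then have r'X: "r' \<in> X" using HB4 r ZX unfolding X_def by blast
        have "(s, r') \<in> W" using ord'[OF sF r'F] sidx r'i y0 hF(2)[OF vF] by auto
        then have r'Z: "r' \<in> Z" using r'X Zeq by auto
        have "\<phi> r' = v" using r'i hi_eq[OF vF] iv unfolding \<phi>_def by simp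
        then show "v \<in> \<phi> ` Z" using r'Z by blast
      qed
      have phiinj: "inj_on \<phi> Z" using iemb_inj_on[OF WWZ WWX phiemb] .
      define c'' where "c'' = hi (a0, t)"
      have c''X: "c'' \<in> X" using C xt unfolding c''_def by auto
      have c''n: "c'' \<notin> \<phi> ` Z"
      proof
        assume "c'' \<in> \<phi> ` Z"
        then obtain r where r: "r \<in> Z" "\<phi> r = c''" by auto
        have "ps r = t" using phiidx[OF r(1)] r(2) idxhi a0 xt unfolding c''_def by auto
        then have "r = x''" using hi_eq[of r] Zidx[OF r(1)] r ZF unfolding x''_def by auto
        then show False using r ZX x''X by auto
      qed
      show ?thesis
      proof (cases "is_prefix (WX, L) (WZ, L)")
        case True
        then obtain S where S: "init_seg WZ S" "word_iso (WX, L) (restr (WZ, L) S)"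
          unfolding is_prefix_def fst_conv by blast
        have SZ: "S \<subseteq> Z" using S(1) FZ unfolding init_seg_def by auto
        have SF: "S \<subseteq> Field W" using SZ ZF by auto
        have r: "restr (WZ, L) S = (Restr W S, L)" using SZ unfolding WZ_def restr_def by auto
        obtain f where f: "bij_betw f X S"
          "\<forall>p\<in>X. \<forall>q\<in>X. (p,q) \<in> WX \<longleftrightarrow> (f p, f q) \<in> Restr W S"
          using S(2) unfolding r word_iso_def fst_conv FX wo_Field_Restr[OF WO SF] by blast
        have fim: "f ` X = S" using f(1) unfolding bij_betw_def by auto
        have femb: "iemb WX WZ X f"
          unfolding iemb_def FZ
        proof (intro conjI ballI allI impI)
          show "f ` X \<subseteq> Z" using fim SZ by auto
        next
          fix p q assume pq: "p \<in> X" "q \<in> X"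
          then have "f p \<in> S" "f q \<in> S" using fim by auto
          then show "(p,q) \<in> WX \<longleftrightarrow> (f p, f q) \<in> WZ" using f(2) pq SZ unfolding WZ_def by auto
        next
          fix v w assume "(v, w) \<in> WZ \<and> w \<in> f ` X"
          then show "v \<in> f ` X" using S(1) fim unfolding init_seg_def by blast
        qed
        have e1: "iemb WX WX X (\<phi> \<circ> f)" using iemb_comp[OF femb phiemb] fim SZ by auto
        have e2: "iemb WX WX X id" using iemb_id[of X WX] FX unfolding WX_def by auto
        have "(\<phi> \<circ> f) c'' = id c''" using iemb_unique[OF WWX WWX e1 e2] c''X FX by auto
        then have "c'' = \<phi> (f c'')" by simp
        moreover have "f c'' \<in> Z" using fim SZ c''X by auto
        ultimately show ?thesis using c''n by blast
      next
        case False
        then have "str_less (WX, L) (WZ, L)" using LEX unfolding lex_le_def by blast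
        then obtain p p' where pp: "p \<in> X" "p' \<in> Z"
          "word_iso (restr (WX, L) (below WX p)) (restr (WZ, L) (below WZ p'))" "L p < L p'"
          unfolding str_less_def fst_conv snd_conv FX FZ by blast
        define Bp where "Bp = below WX p"
        define Bp' where "Bp' = below WZ p'"
        have BpX: "Bp \<subseteq> X" using FX unfolding Bp_def below_def by (auto intro: FieldI1)
        have BpZ: "Bp' \<subseteq> Z" using FZ unfolding Bp'_def below_def by (auto intro: FieldI1)
        have BpF: "Bp \<subseteq> Field W" "Bp' \<subseteq> Field W" using BpX BpZ XF ZF by auto
        have r1: "restr (WX, L) Bp = (Restr W Bp, L)" using BpX unfolding WX_def restr_def by auto
        have r2: "restr (WZ, L) Bp' = (Restr W Bp', L)" using BpZ unfolding WZ_def restr_def by auto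
        obtain f where f: "bij_betw f Bp Bp'"
          "\<forall>b\<in>Bp. \<forall>c\<in>Bp. (b,c) \<in> Restr W Bp \<longleftrightarrow> (f b, f c) \<in> Restr W Bp'"
          using pp(3) unfolding Bp_def[symmetric] Bp'_def[symmetric] r1 r2 word_iso_def fst_conv
            wo_Field_Restr[OF WO BpF(1)] wo_Field_Restr[OF WO BpF(2)] by blast
        have fim: "f ` Bp = Bp'" using f(1) unfolding bij_betw_def by auto
        have femb: "iemb WX WZ Bp f"
          unfolding iemb_def FZ
        proof (intro conjI ballI allI impI)
          show "f ` Bp \<subseteq> Z" using fim BpZ by auto
        next
          fix b c assume bc: "b \<in> Bp" "c \<in> Bp"
          then have "f b \<in> Bp'" "f c \<in> Bp'" using fim by auto
          then show "(b,c) \<in> WX \<longleftrightarrow> (f b, f c) \<in> WZ" using f(2) bc BpX BpZ unfolding WX_def WZ_def by auto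
        next
          fix v w assume vw: "(v, w) \<in> WZ \<and> w \<in> f ` Bp"
          then have wB: "w \<in> Bp'" using fim by auto
          then have wp: "(w, p') \<in> WZ" "w \<noteq> p'" unfolding Bp'_def below_def by auto
          have "(v, p') \<in> WZ" using wo_trans[OF WWZ] vw wp by blast
          moreover have "v \<noteq> p'"
          proof
            assume "v = p'"
            then have "w = p'" using wo_antisym[OF WWZ] vw wp by blast
            then show False using wp by simp
          qed
          ultimately have "v \<in> Bp'" unfolding Bp'_def below_def by auto
          then show "v \<in> f ` Bp" using fim by auto
        qed
        have e1: "iemb WX WX Bp (\<phi> \<circ> f)" using iemb_comp[OF femb phiemb] fim BpZ by auto
        have e2: "iemb WX WX Bp id"
        proof (rule iemb_id)
          show "Bp \<subseteq> Field WX" using BpX FX by auto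
          show "\<forall>a c. (c, a) \<in> WX \<and> a \<in> Bp \<longrightarrow> c \<in> Bp"
          proof (intro allI impI)
            fix b c assume cb: "(c, b) \<in> WX \<and> b \<in> Bp"
            then have bp: "(b, p) \<in> WX" "b \<noteq> p" unfolding Bp_def below_def by auto
            have "(c, p) \<in> WX" using wo_trans[OF WWX] cb bp by blast
            moreover have "c \<noteq> p"
            proof
              assume "c = p"
              then have "b = p" using wo_antisym[OF WWX] cb bp by blast
              then show False using bp by simp
            qed
            ultimately show "c \<in> Bp" unfolding Bp_def below_def by auto
          qed
        qed
        have fixB: "\<phi> (f b) = b" if "b \<in> Bp" for b
          using iemb_unique[OF WWX WWX e1 e2 that] BpX FX by auto
        have php: "\<phi> p' = p"
        proof (rule ccontr)
          assume ne: "\<phi> p' \<noteq> p"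
          have "\<phi> p' \<in> X" using phiX pp(2) by auto
          then have "(\<phi> p', p) \<in> WX \<or> (p, \<phi> p') \<in> WX" using wo_total[OF WWX] pp(1) FX by auto
          then show False
          proof
            assume "(\<phi> p', p) \<in> WX"
            then have inB: "\<phi> p' \<in> Bp" using ne unfolding Bp_def below_def by auto
            then have "\<phi> (f (\<phi> p')) = \<phi> p'" using fixB by blast
            moreover have "f (\<phi> p') \<in> Bp'" using inB fim by auto
            ultimately have "f (\<phi> p') = p'" using phiinj BpZ pp(2) unfolding inj_on_def by blast
            then show False using \<open>f (\<phi> p') \<in> Bp'\<close> unfolding Bp'_def below_def by auto
          next
            assume a: "(p, \<phi> p') \<in> WX"
            then have "p \<in> \<phi> ` Z" using phiemb pp(2) unfolding iemb_def by blast
            then obtain r where r: "r \<in> Z" "p = \<phi> r" by auto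
            have "(r, p') \<in> WZ" using phiemb r pp(2) a unfolding iemb_def by auto
            moreover have "r \<noteq> p'" using r ne by auto
            ultimately have "r \<in> Bp'" unfolding Bp'_def below_def by auto
            then obtain b where b: "b \<in> Bp" "r = f b" using fim by auto
            then have "p = b" using fixB r by auto
            then show False using b unfolding Bp_def below_def by auto
          qed
        qed
        have "L p = L p'" using phiL[OF pp(2)] php by simp
        then show ?thesis using pp(4) by simp
      qed
    qed
  qed
qed

end



definition blk :: "nat \<Rightarrow> nat" where "blk x = fst (prod_decode x)"
definition pos :: "nat \<Rightarrow> nat" where "pos x = snd (prod_decode x)"

lemma xeq: "blk x = blk y \<Longrightarrow> pos x = pos y \<Longrightarrow> x = y"
proof -
  assume "blk x = blk y" "pos x = pos y"
  then have "prod_decode x = prod_decode y" unfolding blk_def pos_def by (simp add: prod_eq_iff)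
  then show "x = y" by simp
qed

lemma x_enc: "x = prod_encode (blk x, pos x)"
  by (simp add: blk_def pos_def)

lemma memW: "(x,y) \<in> fst (block_prod I u) \<longleftrightarrow> blk x \<in> I \<and> blk y \<in> I \<and>
   pos x \<in> Field (fst (u (blk x))) \<and> pos y \<in> Field (fst (u (blk y))) \<and>
   (blk x < blk y \<or> blk x = blk y \<and> (pos x, pos y) \<in> fst (u (blk x)))"
proof
  assume "(x,y) \<in> fst (block_prod I u)"
  then obtain i p j q where "x = prod_encode (i,p)" "y = prod_encode (j,q)" "i \<in> I" "j \<in> I"
    "p \<in> Field (fst (u i))" "q \<in> Field (fst (u j))" "i < j \<or> (i = j \<and> (p,q) \<in> fst (u i))"
    unfolding block_prod_def by auto
  then show "blk x \<in> I \<and> blk y \<in> I \<and>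
   pos x \<in> Field (fst (u (blk x))) \<and> pos y \<in> Field (fst (u (blk y))) \<and>
   (blk x < blk y \<or> blk x = blk y \<and> (pos x, pos y) \<in> fst (u (blk x)))"
    by (simp add: blk_def pos_def)
next
  assume R: "blk x \<in> I \<and> blk y \<in> I \<and>
   pos x \<in> Field (fst (u (blk x))) \<and> pos y \<in> Field (fst (u (blk y))) \<and>
   (blk x < blk y \<or> blk x = blk y \<and> (pos x, pos y) \<in> fst (u (blk x)))"
  have "(x,y) = (prod_encode (blk x, pos x), prod_encode (blk y, pos y))" using x_enc[of x] x_enc[of y] by simp
  then show "(x,y) \<in> fst (block_prod I u)"
    unfolding block_prod_def fst_conv mem_Collect_eq
    apply (rule_tac x="blk x" in exI, rule_tac x="pos x" in exI, rule_tac x="blk y" in exI, rule_tac x="pos y" in exI)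
    using R by blast
qed

lemma snd_bp: "snd (block_prod I u) = (\<lambda>k. snd (u (blk k)) (pos k))"
  unfolding block_prod_def blk_def pos_def by simp

lemma wo_intro:
  assumes "\<forall>x\<in>Field r. (x,x) \<in> r" "\<forall>x y z. (x,y) \<in> r \<longrightarrow> (y,z) \<in> r \<longrightarrow> (x,z) \<in> r"
    "\<forall>x y. (x,y) \<in> r \<longrightarrow> (y,x) \<in> r \<longrightarrow> x = y"
    "\<forall>x\<in>Field r. \<forall>y\<in>Field r. (x,y) \<in> r \<or> (y,x) \<in> r" "wf (r - Id)"
  shows "Well_order r"
  unfolding well_order_on_def linear_order_on_def partial_order_on_def preorder_on_def refl_on_def trans_def antisym_def total_on_def
  using assms by (auto intro: FieldI1 FieldI2)

context
  fixes u :: "nat \<Rightarrow> ('a::linorder) word"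
  assumes WOu: "\<forall>n. wf_word (u n)"
begin

lemma HU: "Well_order (fst (u i))" using WOu unfolding wf_word_def by blast

lemma FW: "x \<in> Field (fst (block_prod UNIV u)) \<longleftrightarrow> pos x \<in> Field (fst (u (blk x)))"
proof
  assume "x \<in> Field (fst (block_prod UNIV u))"
  then obtain y where "(x,y) \<in> fst (block_prod UNIV u) \<or> (y,x) \<in> fst (block_prod UNIV u)"
    unfolding Field_def by blast
  then show "pos x \<in> Field (fst (u (blk x)))" unfolding memW by blast
next
  assume a: "pos x \<in> Field (fst (u (blk x)))"
  then have "(pos x, pos x) \<in> fst (u (blk x))" using wo_refl[OF HU] by blast
  then have "(x,x) \<in> fst (block_prod UNIV u)" unfolding memW using a by simp
  then show "x \<in> Field (fst (block_prod UNIV u))" by (rule FieldI1)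
qed

lemma WO_bp: "Well_order (fst (block_prod UNIV u))"
proof (rule wo_intro)
  show "\<forall>x\<in>Field (fst (block_prod UNIV u)). (x, x) \<in> fst (block_prod UNIV u)"
  proof
    fix x assume "x \<in> Field (fst (block_prod UNIV u))"
    then have a: "pos x \<in> Field (fst (u (blk x)))" using FW by blast
    then have "(pos x, pos x) \<in> fst (u (blk x))" using wo_refl[OF HU] by blast
    then show "(x,x) \<in> fst (block_prod UNIV u)" unfolding memW using a by simp
  qed
  show "\<forall>x y z. (x,y) \<in> fst (block_prod UNIV u) \<longrightarrow> (y,z) \<in> fst (block_prod UNIV u) \<longrightarrow> (x,z) \<in> fst (block_prod UNIV u)"
  proof (intro allI impI)
    fix x y z assume xy: "(x,y) \<in> fst (block_prod UNIV u)" and yz: "(y,z) \<in> fst (block_prod UNIV u)"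
    note A = xy[unfolded memW] and B = yz[unfolded memW]
    show "(x,z) \<in> fst (block_prod UNIV u)"
    proof (cases "blk x < blk z")
      case True then show ?thesis unfolding memW using A B by simp
    next
      case False
      then have e: "blk x = blk y" "blk y = blk z" using A B by auto
      have p1: "(pos x, pos y) \<in> fst (u (blk x))" using A e by auto
      have p2: "(pos y, pos z) \<in> fst (u (blk x))" using B e by auto
      have "(pos x, pos z) \<in> fst (u (blk x))" by (rule wo_trans[OF HU p1 p2])
      then show ?thesis unfolding memW using A B e by simp
    qed
  qed
  show "\<forall>x y. (x,y) \<in> fst (block_prod UNIV u) \<longrightarrow> (y,x) \<in> fst (block_prod UNIV u) \<longrightarrow> x = y"
  proof (intro allI impI)
    fix x y assume xy: "(x,y) \<in> fst (block_prod UNIV u)" and yx: "(y,x) \<in> fst (block_prod UNIV u)"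
    note A = xy[unfolded memW] and B = yx[unfolded memW]
    have e: "blk x = blk y" using A B by auto
    have p1: "(pos x, pos y) \<in> fst (u (blk x))" using A e by auto
    have p2: "(pos y, pos x) \<in> fst (u (blk x))" using B e by auto
    have "pos x = pos y" by (rule wo_antisym[OF HU p1 p2])
    then show "x = y" using xeq e by blast
  qed
  show "\<forall>x\<in>Field (fst (block_prod UNIV u)). \<forall>y\<in>Field (fst (block_prod UNIV u)).
     (x,y) \<in> fst (block_prod UNIV u) \<or> (y,x) \<in> fst (block_prod UNIV u)"
  proof (intro ballI)
    fix x y assume "x \<in> Field (fst (block_prod UNIV u))" "y \<in> Field (fst (block_prod UNIV u))"
    then have a: "pos x \<in> Field (fst (u (blk x)))" "pos y \<in> Field (fst (u (blk y)))" using FW by blast+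
    show "(x,y) \<in> fst (block_prod UNIV u) \<or> (y,x) \<in> fst (block_prod UNIV u)"
    proof (cases "blk x = blk y")
      case True
      then have "(pos x, pos y) \<in> fst (u (blk x)) \<or> (pos y, pos x) \<in> fst (u (blk x))"
        using wo_total[OF HU] a by simp
      then show ?thesis unfolding memW using a True by auto
    next
      case False
      then show ?thesis unfolding memW using a by auto
    qed
  qed
  show "wf (fst (block_prod UNIV u) - Id)"
    unfolding wf_eq_minimal
  proof (intro allI impI)
    fix Q :: "nat set" and x assume xQ: "x \<in> Q"
    show "\<exists>z\<in>Q. \<forall>y. (y, z) \<in> fst (block_prod UNIV u) - Id \<longrightarrow> y \<notin> Q"
    proof (cases "\<exists>z\<in>Q. pos z \<notin> Field (fst (u (blk z)))")
      case True
      then obtain z where z: "z \<in> Q" "pos z \<notin> Field (fst (u (blk z)))" by blast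
      show ?thesis
      proof (intro bexI[of _ z] allI impI)
        fix y assume "(y, z) \<in> fst (block_prod UNIV u) - Id"
        then have "(y, z) \<in> fst (block_prod UNIV u)" by simp
        then have "pos z \<in> Field (fst (u (blk z)))" unfolding memW by blast
        then show "y \<notin> Q" using z by simp
      qed (rule z(1))
    next
      case False
      define i0 where "i0 = (LEAST i. \<exists>z\<in>Q. blk z = i)"
      have "\<exists>z\<in>Q. blk z = i0" unfolding i0_def by (rule LeastI[of _ "blk x"]) (use xQ in blast)
      then obtain z1 where z1: "z1 \<in> Q" "blk z1 = i0" by blast
      define Qi where "Qi = {p. \<exists>z\<in>Q. blk z = i0 \<and> pos z = p}"
      have "pos z1 \<in> Qi" using z1 unfolding Qi_def by blast
      have QiF: "Qi \<subseteq> Field (fst (u i0))" using False unfolding Qi_def by auto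
      obtain p0 where p0: "p0 \<in> Qi" "\<forall>b\<in>Qi. (p0, b) \<in> fst (u i0)"
        using wo_min[OF HU \<open>pos z1 \<in> Qi\<close> QiF] by blast
      then obtain z0 where z0: "z0 \<in> Q" "blk z0 = i0" "pos z0 = p0" unfolding Qi_def by blast
      show ?thesis
      proof (intro bexI[of _ z0] allI impI)
        fix y assume y: "(y, z0) \<in> fst (block_prod UNIV u) - Id"
        show "y \<notin> Q"
        proof
          assume yQ: "y \<in> Q"
          have yle: "i0 \<le> blk y" unfolding i0_def by (rule Least_le) (use yQ in blast)
          note A = y[unfolded Diff_iff memW]
          then have "blk y = i0" using yle z0 by auto
          then have "pos y \<in> Qi" using yQ unfolding Qi_def by blast
          then have "(p0, pos y) \<in> fst (u i0)" using p0 by blast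
          moreover have "(pos y, p0) \<in> fst (u i0)" using A z0 \<open>blk y = i0\<close> by auto
          ultimately have "pos y = p0" using wo_antisym[OF HU] by blast
          then have "y = z0" using xeq[of y z0] \<open>blk y = i0\<close> z0 by simp
          then show False using y by auto
        qed
      qed (rule z0(1))
    qed
  qed
qed

end

theorem mainTheorem5:
  fixes u :: "nat \<Rightarrow> ('a::{linorder,finite}) word"
  assumes "\<forall>n. wf_word (u n)"
    and "\<forall>n. prime_word (block_prod {..n} u)"
  shows "prime_word (block_prod UNIV u)"
proof -
  define W where "W = fst (block_prod UNIV u)"
  define L where "L = snd (block_prod UNIV u)"
  define B where "B n = {x. blk x \<le> n \<and> pos x \<in> Field (fst (u (blk x)))}" for n
  have FWx: "x \<in> Field W \<longleftrightarrow> pos x \<in> Field (fst (u (blk x)))" for x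
    using FW[OF assms(1)] unfolding W_def by blast
  have eq: "block_prod {..n} u = (Restr W (B n), L)" for n
  proof (rule prod_eqI)
    show "fst (block_prod {..n} u) = fst (Restr W (B n), L)"
    proof (rule set_eqI)
      fix xy :: "nat \<times> nat"
      obtain x y where xy: "xy = (x,y)" by fastforce
      show "xy \<in> fst (block_prod {..n} u) \<longleftrightarrow> xy \<in> fst (Restr W (B n), L)"
        unfolding xy fst_conv W_def B_def by (auto simp: memW)
    qed
    show "snd (block_prod {..n} u) = snd (Restr W (B n), L)"
      unfolding L_def snd_conv snd_bp ..
  qed
  have "setting W L B"
  proof
    show "Well_order W" unfolding W_def by (rule WO_bp[OF assms(1)])
    show "B n \<subseteq> Field W" for n unfolding B_def using FWx by auto
    show "B n \<subseteq> B m" if "n \<le> m" for n m unfolding B_def using that by auto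
    show "\<exists>n. x \<in> B n" if "x \<in> Field W" for x unfolding B_def using that FWx by auto
    show "y \<in> B n" if "(y,x) \<in> W" "x \<in> B n" for n x y
      using that unfolding B_def W_def by (auto simp: memW)
    show "prime_word (Restr W (B n), L)" for n
    proof -
      have "prime_word (block_prod {..n} u)" using assms(2) by blast
      then show ?thesis unfolding eq[of n] .
    qed
  qed
  then interpret S: setting W L B .
  have "prime_word (W, L)"
    unfolding prime_word_def using S.primitive_part S.suffix_part by blast
  then show ?thesis unfolding W_def L_def by simp
qed



end
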